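(* Let $r\ge2$ and $h_a:=e_a-f_a\in\mathbb{K}[\mathcal{S}_{r+1}]$. Let $t$ be the standard Young tableau of frame $(2,1^{r-1})\vdash r+1$ whose first row is $1,\ r+1$ and whose first column is $1,2,\ldots,r$ (from top to bottom); this is the lexicographically greatest standard tableau of this frame. Then $h_a\cdot e_t=h_a$. Moreover, for every other standard tableau $t'$ of frame $(2,1^{r-1})$, $h_a\cdot e_{t'}=0$.
   Context: $\mathbb{K}\in\{\mathbb{R},\mathbb{C}\}$; group ring product $(p\cdot q)(i)=p(q(i))$. $\tilde{\mathcal S}_r=\{p\in\mathcal{S}_{r+1}:p(r+1)=r+1\}$, $e_a=\frac1{r!}\sum_{p\in\tilde{\mathcal S}_r}\mathrm{sign}(p)p$, $f_a=\frac1{(r+1)!}\sum_{p\in\mathcal{S}_{r+1}}\mathrm{sign}(p)p$. For a Young tableau $t$ (a filling of a Young frame with $1,\ldots,r+1$, each once), $\mathcal{H}_t$ and $\mathcal{V}_t$ are the groups of permutations preserving each row, respectively each column, of $t$; the Young symmetrizer is $y_t=\sum_{p\in\mathcal{H}_t}\sum_{q\in\mathcal{V}_t}\mathrm{sign}(q)\,p\cdot q$, and $e_t=\mu_ty_t$ with the nonzero constant $\mu_t$ making $e_t$ idempotent. A tableau is standard if entries increase along rows (left to right) and down columns. Lexicographic order: $t_2>t_1$ (same frame) if, reading both tableaux simultaneously row by row from left to right and top to bottom, the first position where they differ has a larger entry in $t_2$. The frame $(2,1^{r-1})$ has a first row of two boxes followed by $r-1$ rows of one box. *)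

theory Defs
  imports "HOL-Combinatorics.Combinatorics"
begin

text \<open>Permutations of {1..n} (the symmetric group S_n), with composition as product:
  (p \<cdot> q)(i) = p (q i), i.e. p \<cdot> q = p \<circ> q.\<close>
definition perms :: "nat \<Rightarrow> (nat \<Rightarrow> nat) set" where
  "perms n = {p. p permutes {1..n}}"

text \<open>Elements of the group ring K[S_n] are represented as coefficient functions
  (nat \<Rightarrow> nat) \<Rightarrow> 'a, supported on perms n.  Product of the group ring:\<close>
definition gr_mult :: "nat \<Rightarrow> ((nat \<Rightarrow> nat) \<Rightarrow> 'a::field) \<Rightarrow> ((nat \<Rightarrow> nat) \<Rightarrow> 'a) \<Rightarrow> ((nat \<Rightarrow> nat) \<Rightarrow> 'a)" where
  "gr_mult n x y = (\<lambda>s. \<Sum>p\<in>perms n. \<Sum>q\<in>perms n. if p \<circ> q = s then x p * y q else 0)"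

definition e_a :: "nat \<Rightarrow> (nat \<Rightarrow> nat) \<Rightarrow> 'a::field" where
  "e_a r = (\<lambda>s. if s \<in> perms (r+1) \<and> s (r+1) = r+1
              then of_int (sign s) / of_nat (fact r) else 0)"

definition f_a :: "nat \<Rightarrow> (nat \<Rightarrow> nat) \<Rightarrow> 'a::field" where
  "f_a r = (\<lambda>s. if s \<in> perms (r+1) then of_int (sign s) / of_nat (fact (r+1)) else 0)"

definition h_a :: "nat \<Rightarrow> (nat \<Rightarrow> nat) \<Rightarrow> 'a::field" where
  "h_a r = (\<lambda>s. e_a r s - f_a r s)"

text \<open>Young frames are lists of row lengths; cells are (row, column), 0-indexed.\<close>
definition cells :: "nat list \<Rightarrow> (nat \<times> nat) set" where
  "cells lam = {(i, j). i < length lam \<and> j < lam ! i}"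

text \<open>A Young tableau of frame lam filled with 1..n (each once); values outside
  the frame are normalised to 0 so that tableaux are represented uniquely.\<close>
definition tableau :: "nat list \<Rightarrow> nat \<Rightarrow> (nat \<times> nat \<Rightarrow> nat) \<Rightarrow> bool" where
  "tableau lam n T \<longleftrightarrow> bij_betw T (cells lam) {1..n} \<and> (\<forall>c. c \<notin> cells lam \<longrightarrow> T c = 0)"

definition standard_tableau :: "nat list \<Rightarrow> nat \<Rightarrow> (nat \<times> nat \<Rightarrow> nat) \<Rightarrow> bool" where
  "standard_tableau lam n T \<longleftrightarrow> tableau lam n T \<and>
     (\<forall>i j. (i, Suc j) \<in> cells lam \<longrightarrow> T (i, j) < T (i, Suc j)) \<and>
     (\<forall>i j. (Suc i, j) \<in> cells lam \<longrightarrow> T (i, j) < T (Suc i, j))"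

definition row_group :: "nat list \<Rightarrow> nat \<Rightarrow> (nat \<times> nat \<Rightarrow> nat) \<Rightarrow> (nat \<Rightarrow> nat) set" where
  "row_group lam n T = {p \<in> perms n. \<forall>c\<in>cells lam. \<exists>c'\<in>cells lam. fst c' = fst c \<and> p (T c) = T c'}"

definition col_group :: "nat list \<Rightarrow> nat \<Rightarrow> (nat \<times> nat \<Rightarrow> nat) \<Rightarrow> (nat \<Rightarrow> nat) set" where
  "col_group lam n T = {p \<in> perms n. \<forall>c\<in>cells lam. \<exists>c'\<in>cells lam. snd c' = snd c \<and> p (T c) = T c'}"

definition young_sym :: "nat list \<Rightarrow> nat \<Rightarrow> (nat \<times> nat \<Rightarrow> nat) \<Rightarrow> (nat \<Rightarrow> nat) \<Rightarrow> 'a::field" where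
  "young_sym lam n T = (\<lambda>s. \<Sum>p\<in>row_group lam n T. \<Sum>q\<in>col_group lam n T.
       if p \<circ> q = s then of_int (sign q) else 0)"

definition young_mu :: "nat list \<Rightarrow> nat \<Rightarrow> (nat \<times> nat \<Rightarrow> nat) \<Rightarrow> 'a::field" where
  "young_mu lam n T = (THE \<mu>. \<mu> \<noteq> 0 \<and>
      (let e = (\<lambda>s. \<mu> * young_sym lam n T s) in gr_mult n e e = e))"

definition young_idem :: "nat list \<Rightarrow> nat \<Rightarrow> (nat \<times> nat \<Rightarrow> nat) \<Rightarrow> (nat \<Rightarrow> nat) \<Rightarrow> 'a::field" where
  "young_idem lam n T = (\<lambda>s. young_mu lam n T * young_sym lam n T s)"

definition lex_greater :: "nat list \<Rightarrow> (nat \<times> nat \<Rightarrow> nat) \<Rightarrow> (nat \<times> nat \<Rightarrow> nat) \<Rightarrow> bool" where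
  "lex_greater lam T2 T1 \<longleftrightarrow> (\<exists>c\<in>cells lam. T1 c < T2 c \<and>
      (\<forall>c'\<in>cells lam. (fst c' < fst c \<or> (fst c' = fst c \<and> snd c' < snd c)) \<longrightarrow> T2 c' = T1 c'))"

definition hook_frame :: "nat \<Rightarrow> nat list" where
  "hook_frame r = 2 # replicate (r - 1) 1"

definition t_hook :: "nat \<Rightarrow> nat \<times> nat \<Rightarrow> nat" where
  "t_hook r = (\<lambda>(i, j). if j = 0 \<and> i < r then i + 1
                       else if i = 0 \<and> j = 1 then r + 1 else 0)"

end

theory Submission
  imports Defs
begin


lemma finite_perms: "finite (perms n)"
  unfolding perms_def by (simp add: finite_permutations)

lemma card_fix1:
  assumes "finite S" "a \<in> S"
  shows "card {p. p permutes S \<and> p a = a} = fact (card S - 1)"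
proof -
  have "{p. p permutes S \<and> p a = a} = {p. p permutes (S - {a})}"
  proof safe
    fix p assume "p permutes S" "p a = a"
    then show "p permutes S - {a}" unfolding permutes_def by auto
  next
    fix p assume "p permutes S - {a}"
    then show "p permutes S" by (rule permutes_subset) auto
  next
    fix p assume "p permutes S - {a}"
    then show "p a = a" by (rule permutes_not_in) auto
  qed
  then show ?thesis using assms card_permutations[of "S - {a}"] by simp
qed

lemma card_fix2:
  assumes "finite S" "a \<in> S" "c \<in> S" "a \<noteq> c"
  shows "card {p. p permutes S \<and> p a = a \<and> p c = c} = fact (card S - 2)"
proof -
  have "{p. p permutes S \<and> p a = a \<and> p c = c} = {p. p permutes (S - {a,c})}"
  proof safe
    fix p assume "p permutes S" "p a = a" "p c = c"
    then show "p permutes S - {a,c}" unfolding permutes_def by auto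
  next
    fix p assume "p permutes S - {a,c}"
    then show "p permutes S" by (rule permutes_subset) auto
  next
    fix p assume "p permutes S - {a,c}"
    then show "p a = a" by (rule permutes_not_in) auto
  next
    fix p assume "p permutes S - {a,c}"
    then show "p c = c" by (rule permutes_not_in) auto
  qed
  moreover have "card (S - {a,c}) = card S - 2" using assms by (simp add: card_Diff_subset)
  ultimately show ?thesis using assms card_permutations[of "S - {a,c}"] by simp
qed

lemma card_shift:
  assumes "g permutes S"
  shows "card {p. p permutes S \<and> Q (g \<circ> p)} = card {p. p permutes S \<and> Q p}"
proof -
  have "bij_betw (\<lambda>p. g \<circ> p) {p. p permutes S \<and> Q (g \<circ> p)} {p. p permutes S \<and> Q p}"
  proof (rule bij_betw_byWitness[where f'="\<lambda>p. inv g \<circ> p"])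
    show "\<forall>a\<in>{p. p permutes S \<and> Q (g \<circ> p)}. inv g \<circ> (g \<circ> a) = a"
      using permutes_inv_o(2)[OF assms] by (simp add: o_assoc)
    show "\<forall>a\<in>{p. p permutes S \<and> Q p}. g \<circ> (inv g \<circ> a) = a"
      using permutes_inv_o(1)[OF assms] by (simp add: o_assoc)
    show "(\<circ>) g ` {p. p permutes S \<and> Q (g \<circ> p)} \<subseteq> {p. p permutes S \<and> Q p}"
      using assms by (auto intro: permutes_compose)
    show "(\<circ>) (inv g) ` {p. p permutes S \<and> Q p} \<subseteq> {p. p permutes S \<and> Q (g \<circ> p)}"
      using assms permutes_inv_o(1)[OF assms] by (auto intro: permutes_compose permutes_inv simp: o_assoc)
  qed
  then show ?thesis by (rule bij_betw_same_card)
qed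

lemma card_val1:
  assumes "finite S" "a \<in> S" "b \<in> S"
  shows "card {p. p permutes S \<and> p a = b} = fact (card S - 1)"
proof -
  have "{p. p permutes S \<and> p a = b} = {p. p permutes S \<and> (transpose a b \<circ> p) a = a}"
    by (auto simp: transpose_def split: if_splits)
  also have "card \<dots> = card {p. p permutes S \<and> p a = a}"
    using card_shift[OF permutes_swap_id[OF assms(2,3)], of "\<lambda>q. q a = a"] by simp
  finally show ?thesis using card_fix1[OF assms(1,2)] by simp
qed

lemma card_val2:
  assumes "finite S" "a \<in> S" "b \<in> S" "c \<in> S" "d \<in> S" "a \<noteq> c" "b \<noteq> d"
  shows "card {p. p permutes S \<and> p a = b \<and> p c = d} = fact (card S - 2)"
proof -
  define d' where "d' = transpose a b d"
  have d'S: "d' \<in> S" "d' \<noteq> a" using assms unfolding d'_def by (auto simp: transpose_def)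
  have "{p. p permutes S \<and> p a = b \<and> p c = d} = {p. p permutes S \<and> (transpose a b \<circ> p) a = a \<and> (transpose a b \<circ> p) c = d'}"
    using assms unfolding d'_def by (auto simp: transpose_def split: if_splits)
  also have "card \<dots> = card {p. p permutes S \<and> p a = a \<and> p c = d'}"
    using card_shift[OF permutes_swap_id[OF assms(2,3)], of "\<lambda>q. q a = a \<and> q c = d'"] by simp
  also have "{p. p permutes S \<and> p a = a \<and> p c = d'} = {p. p permutes S \<and> (transpose c d' \<circ> p) a = a \<and> (transpose c d' \<circ> p) c = c}"
    using assms d'S by (auto simp: transpose_def split: if_splits)
  also have "card \<dots> = card {p. p permutes S \<and> p a = a \<and> p c = c}"
    using card_shift[OF permutes_swap_id[OF assms(4) d'S(1)], of "\<lambda>q. q a = a \<and> q c = c"] by simp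
  finally show ?thesis using card_fix2[OF assms(1,2,4,6)] by simp
qed



lemma perm_of_perms: "p \<in> perms n \<Longrightarrow> permutation p"
  unfolding perms_def by (auto intro: permutes_imp_permutation)

lemma perms_comp: "p \<in> perms n \<Longrightarrow> q \<in> perms n \<Longrightarrow> p \<circ> q \<in> perms n"
  unfolding perms_def by (auto intro: permutes_compose)

lemma perms_inv: "p \<in> perms n \<Longrightarrow> inv p \<in> perms n"
  unfolding perms_def by (auto intro: permutes_inv)

lemma gr_mult_perm:
  assumes "s \<in> perms n"
  shows "gr_mult n x y s = (\<Sum>p\<in>perms n. x p * y (inv p \<circ> s))"
  unfolding gr_mult_def
proof (rule sum.cong[OF refl])
  fix p assume p: "p \<in> perms n"
  then have pp: "p permutes {1..n}" by (simp add: perms_def)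
  have eq: "\<And>q. (p \<circ> q = s) = (q = inv p \<circ> s)"
    using permutes_inv_o[OF pp] by (metis comp_assoc comp_id id_comp)
  have "inv p \<circ> s \<in> perms n" using perms_comp[OF perms_inv[OF p] assms] .
  then show "(\<Sum>q\<in>perms n. if p \<circ> q = s then x p * y q else 0) = x p * y (inv p \<circ> s)"
    unfolding eq by (simp add: sum.delta' finite_perms)
qed

lemma gr_mult_notperm:
  assumes "s \<notin> perms n"
  shows "gr_mult n x y s = 0"
  unfolding gr_mult_def using assms perms_comp by (auto intro!: sum.neutral)

lemma gr_mult_scale:
  "gr_mult n (\<lambda>s. a * x s) (\<lambda>s. b * y s) = (\<lambda>s. a * b * gr_mult n x y s)"
  unfolding gr_mult_def by (auto simp: sum_distrib_left intro!: sum.cong ext)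

lemma gr_mult_scale2:
  "gr_mult n x (\<lambda>s. b * y s) = (\<lambda>s. b * gr_mult n x y s)"
  unfolding gr_mult_def by (auto simp: sum_distrib_left intro!: sum.cong ext)

lemma S1:
  assumes "a \<in> {1..n}" "b \<in> {1..n}"
  shows "(\<Sum>p\<in>perms n. of_bool (p a = b) :: 'a::comm_ring_1) = of_nat (fact (n - 1))"
proof -
  have "perms n \<inter> {p. p a = b} = {p. p permutes {1..n} \<and> p a = b}" by (auto simp: perms_def)
  then show ?thesis using card_val1[of "{1..n}" a b] assms by (simp add: finite_perms)
qed

lemma S2:
  assumes "a \<in> {1..n}" "b \<in> {1..n}" "c \<in> {1..n}" "d \<in> {1..n}" "a \<noteq> c" "b \<noteq> d"
  shows "(\<Sum>p\<in>perms n. of_bool (p a = b \<and> p c = d) :: 'a::comm_ring_1) = of_nat (fact (n - 2))"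
proof -
  have "perms n \<inter> {p. p a = b \<and> p c = d} = {p. p permutes {1..n} \<and> p a = b \<and> p c = d}" by (auto simp: perms_def)
  then show ?thesis using card_val2[of "{1..n}" a b c d] assms by (simp add: finite_perms)
qed

definition yt :: "nat \<Rightarrow> (nat \<Rightarrow> nat) \<Rightarrow> 'a::field" where
  "yt r s = (if s \<in> perms (r+1) then of_int (sign s) * (of_bool (s (r+1) = r+1) - of_bool (s (r+1) = 1)) else 0)"

lemma perms_inj: "p \<in> perms n \<Longrightarrow> p x = p y \<longleftrightarrow> x = y"
  using permutes_inj[of p "{1..n}"] unfolding perms_def by (auto simp: inj_eq)

lemma perms_range: "p \<in> perms n \<Longrightarrow> x \<in> {1..n} \<Longrightarrow> p x \<in> {1..n}"
  unfolding perms_def using permutes_in_image[of p "{1..n}" x] by blast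

lemma yt_inv_comp:
  assumes p: "p \<in> perms (r+1)" and s: "s \<in> perms (r+1)"
  shows "yt r (inv p \<circ> s) = (of_int (sign p * sign s) :: 'a::field) *
           (of_bool (p (r+1) = s (r+1)) - of_bool (p 1 = s (r+1)))"
proof -
  have pp: "p permutes {1..r+1}" using p by (simp add: perms_def)
  have "inv p \<circ> s \<in> perms (r+1)" using perms_comp[OF perms_inv[OF p] s] .
  moreover have "sign (inv p \<circ> s) = sign p * sign s"
    using perm_of_perms[OF p] perm_of_perms[OF s]
    by (simp add: sign_compose permutation_inverse sign_inverse)
  moreover have "\<And>k. (inv p (s (r+1)) = k) = (p k = s (r+1))" using permutes_inv_eq[OF pp] by simp
  ultimately show ?thesis unfolding yt_def by simp
qed

lemma h_a_val:
  assumes p: "p \<in> perms (r+1)"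
  shows "(h_a r p :: 'a::field) = of_int (sign p) * (of_bool (p (r+1) = r+1) / of_nat (fact r) - 1 / of_nat (fact (r+1)))"
  using p unfolding h_a_def e_a_def f_a_def by (auto simp: field_simps)



lemma HS:
  assumes r: "r \<ge> 2" and m: "m \<in> {1..r+1}"
  shows "(\<Sum>p\<in>perms (r+1). (of_bool (p (r+1) = r+1) / of_nat (fact r) - 1 / of_nat (fact (r+1)))
            * (of_bool (p (r+1) = m) - of_bool (p 1 = m)) :: 'a::field_char_0)
         = (if m = r+1 then 1 else - 1 / of_nat r)"
proof (cases "m = r+1")
  case True
  have "(\<Sum>p\<in>perms (r+1). (of_bool (p (r+1) = r+1) / of_nat (fact r) - 1 / of_nat (fact (r+1)))
            * (of_bool (p (r+1) = m) - of_bool (p 1 = m)) :: 'a)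
     = (\<Sum>p\<in>perms (r+1). of_bool (p (r+1) = r+1) / of_nat (fact r) - of_bool (p (r+1) = r+1) / of_nat (fact (r+1))
            + of_bool (p 1 = r+1) / of_nat (fact (r+1)))"
  proof (rule sum.cong[OF refl])
    fix p assume p: "p \<in> perms (r+1)"
    have "\<not> (p (r+1) = r+1 \<and> p 1 = r+1)" using perms_inj[OF p, of "r+1" 1] r by auto
    then show "(of_bool (p (r+1) = r+1) / of_nat (fact r) - 1 / of_nat (fact (r+1)))
            * (of_bool (p (r+1) = m) - of_bool (p 1 = m)) = (of_bool (p (r+1) = r+1) / of_nat (fact r) - of_bool (p (r+1) = r+1) / of_nat (fact (r+1))
            + of_bool (p 1 = r+1) / of_nat (fact (r+1)) :: 'a)"
      using True r by (cases "p (r+1) = r+1"; cases "p 1 = r+1") (simp_all add: field_simps)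
  qed
  also have "\<dots> = of_nat (fact r) / of_nat (fact r) - of_nat (fact r) / of_nat (fact (r+1))
       + of_nat (fact r) / of_nat (fact (r+1))"
    by (simp add: sum.distrib sum_subtractf sum_divide_distrib[symmetric] S1)
  also have "\<dots> = 1" by simp
  finally show ?thesis using True by simp
next
  case False
  have "(\<Sum>p\<in>perms (r+1). (of_bool (p (r+1) = r+1) / of_nat (fact r) - 1 / of_nat (fact (r+1)))
            * (of_bool (p (r+1) = m) - of_bool (p 1 = m)) :: 'a)
     = (\<Sum>p\<in>perms (r+1). of_bool (p 1 = m) / of_nat (fact (r+1)) - of_bool (p (r+1) = m) / of_nat (fact (r+1))
            - of_bool (p (r+1) = r+1 \<and> p 1 = m) / of_nat (fact r))"
    by (rule sum.cong[OF refl]) (use False in \<open>cases "p (r+1) = r+1"; cases "p 1 = m"; cases "p (r+1) = m"; simp add: field_simps\<close>)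
  also have "\<dots> = of_nat (fact r) / of_nat (fact (r+1)) - of_nat (fact r) / of_nat (fact (r+1))
       - of_nat (fact (r-1)) / of_nat (fact r)"
  proof -
    have a: "(\<Sum>p\<in>perms (r+1). of_bool (p 1 = m) :: 'a) = fact r"
      using m by (simp add: S1)
    have b: "(\<Sum>p\<in>perms (r+1). of_bool (p (r+1) = m) :: 'a) = fact r"
      using m by (simp add: S1)
    have c: "(\<Sum>p\<in>perms (r+1). of_bool (p (r+1) = r+1 \<and> p 1 = m) :: 'a) = fact (r-1)"
      using m False r by (simp add: S2)
    show ?thesis
      by (simp only: sum_subtractf sum_divide_distrib[symmetric] a b c of_nat_fact)
  qed
  also have "\<dots> = - 1 / of_nat r"
  proof -
    obtain k where k: "r = Suc k" using r by (cases r) auto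
    have "(of_nat (fact k) :: 'a) / of_nat (fact (Suc k)) = 1 / of_nat (Suc k)"
    proof -
      have e: "fact (Suc k) = Suc k * fact k" by simp
      have nz: "(of_nat (fact k) :: 'a) \<noteq> 0" "(of_nat (Suc k) :: 'a) \<noteq> 0" by (simp_all del: of_nat_Suc)
      show ?thesis unfolding e of_nat_mult using nz by (simp add: divide_simps del: of_nat_Suc)
    qed
    then show ?thesis unfolding k by simp
  qed
  finally show ?thesis using False by simp
qed

lemma YS:
  assumes r: "r \<ge> 2" and m: "m \<in> {1..r+1}"
  shows "(\<Sum>p\<in>perms (r+1). (of_bool (p (r+1) = r+1) - of_bool (p (r+1) = 1))
            * (of_bool (p (r+1) = m) - of_bool (p 1 = m)) :: 'a::field_char_0)
         = of_nat (fact r + fact (r-1)) * (of_bool (m = r+1) - of_bool (m = 1))"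
proof -
  consider "m = r+1" | "m = 1" | "m \<noteq> r+1" "m \<noteq> 1" by blast
  then show ?thesis
  proof cases
    case 1
    have "(\<Sum>p\<in>perms (r+1). (of_bool (p (r+1) = r+1) - of_bool (p (r+1) = 1))
            * (of_bool (p (r+1) = m) - of_bool (p 1 = m)) :: 'a)
       = (\<Sum>p\<in>perms (r+1). of_bool (p (r+1) = r+1) + of_bool (p (r+1) = 1 \<and> p 1 = r+1))"
    proof (rule sum.cong[OF refl])
      fix p assume p: "p \<in> perms (r+1)"
      have "\<not> (p (r+1) = r+1 \<and> p 1 = r+1)" using perms_inj[OF p, of "r+1" 1] r by auto
      then show "(of_bool (p (r+1) = r+1) - of_bool (p (r+1) = 1))
            * (of_bool (p (r+1) = m) - of_bool (p 1 = m)) = (of_bool (p (r+1) = r+1) + of_bool (p (r+1) = 1 \<and> p 1 = r+1) :: 'a)"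
        using 1 r by (cases "p (r+1) = r+1"; cases "p 1 = r+1"; cases "p (r+1) = 1") simp_all
    qed
    also have "\<dots> = of_nat (fact r) + of_nat (fact (r-1))"
      using r by (simp add: sum.distrib S1 S2)
    finally show ?thesis using 1 r by simp
  next
    case 2
    have "(\<Sum>p\<in>perms (r+1). (of_bool (p (r+1) = r+1) - of_bool (p (r+1) = 1))
            * (of_bool (p (r+1) = m) - of_bool (p 1 = m)) :: 'a)
       = (\<Sum>p\<in>perms (r+1). - of_bool (p (r+1) = r+1 \<and> p 1 = 1) - of_bool (p (r+1) = 1))"
    proof (rule sum.cong[OF refl])
      fix p assume p: "p \<in> perms (r+1)"
      have "\<not> (p (r+1) = 1 \<and> p 1 = 1)" using perms_inj[OF p, of "r+1" 1] r by auto
      then show "(of_bool (p (r+1) = r+1) - of_bool (p (r+1) = 1))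
            * (of_bool (p (r+1) = m) - of_bool (p 1 = m)) = (- of_bool (p (r+1) = r+1 \<and> p 1 = 1) - of_bool (p (r+1) = 1) :: 'a)"
        using 2 r by (cases "p (r+1) = r+1"; cases "p 1 = 1"; cases "p (r+1) = 1") simp_all
    qed
    also have "\<dots> = - of_nat (fact (r-1)) - of_nat (fact r)"
      using r by (simp add: sum.distrib sum_subtractf sum_negf S1 S2)
    finally show ?thesis using 2 r by simp
  next
    case 3
    have "(\<Sum>p\<in>perms (r+1). (of_bool (p (r+1) = r+1) - of_bool (p (r+1) = 1))
            * (of_bool (p (r+1) = m) - of_bool (p 1 = m)) :: 'a)
       = (\<Sum>p\<in>perms (r+1). of_bool (p (r+1) = 1 \<and> p 1 = m) - of_bool (p (r+1) = r+1 \<and> p 1 = m))"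
      by (rule sum.cong[OF refl]) (use 3 in \<open>cases "p (r+1) = r+1"; cases "p 1 = m"; cases "p (r+1) = 1"; cases "p (r+1) = m"; simp\<close>)
    also have "\<dots> = 0"
      using r m 3 by (simp add: sum_subtractf S2)
    finally show ?thesis using 3 by simp
  qed
qed



lemma cells_hook:
  assumes "r \<ge> 1"
  shows "(i, j) \<in> cells (hook_frame r) \<longleftrightarrow> (j = 0 \<and> i < r) \<or> (i = 0 \<and> j = 1)"
proof -
  have len: "length (hook_frame r) = r" using assms by (simp add: hook_frame_def)
  have nth: "i < r \<Longrightarrow> hook_frame r ! i = (if i = 0 then 2 else 1)" for i
    using assms by (cases i) (auto simp: hook_frame_def)
  show ?thesis unfolding cells_def using len nth assms by (cases "i = 0") auto
qed

lemma cells_hook': "r \<ge> 1 \<Longrightarrow> c \<in> cells (hook_frame r) \<longleftrightarrow> (snd c = 0 \<and> fst c < r) \<or> (fst c = 0 \<and> snd c = 1)"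
  using cells_hook[of r "fst c" "snd c"] by simp

lemma t_hook_standard:
  assumes r: "r \<ge> 2"
  shows "standard_tableau (hook_frame r) (r+1) (t_hook r)"
proof -
  have bij: "bij_betw (t_hook r) (cells (hook_frame r)) {1..r+1}"
  proof (rule bij_betw_byWitness[where f'="\<lambda>v. if v = r+1 then (0,1) else (v - 1, 0)"])
    show "\<forall>a\<in>cells (hook_frame r). (if t_hook r a = r + 1 then (0, 1) else (t_hook r a - 1, 0)) = a"
      using r by (auto simp: cells_hook' t_hook_def)
    show "\<forall>a'\<in>{1..r + 1}. t_hook r (if a' = r + 1 then (0, 1) else (a' - 1, 0)) = a'"
      using r by (auto simp: t_hook_def)
    show "t_hook r ` cells (hook_frame r) \<subseteq> {1..r + 1}"
      using r by (auto simp: cells_hook' t_hook_def)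
    show "(\<lambda>v. if v = r + 1 then (0, 1) else (v - 1, 0)) ` {1..r + 1} \<subseteq> cells (hook_frame r)"
      using r by (auto simp: cells_hook')
  qed
  moreover have "\<forall>c. c \<notin> cells (hook_frame r) \<longrightarrow> t_hook r c = 0"
    using r by (auto simp: cells_hook' t_hook_def)
  moreover have "\<forall>i j. (i, Suc j) \<in> cells (hook_frame r) \<longrightarrow> t_hook r (i, j) < t_hook r (i, Suc j)"
    using r by (auto simp: cells_hook t_hook_def)
  moreover have "\<forall>i j. (Suc i, j) \<in> cells (hook_frame r) \<longrightarrow> t_hook r (i, j) < t_hook r (Suc i, j)"
    using r by (auto simp: cells_hook t_hook_def)
  ultimately show ?thesis unfolding standard_tableau_def tableau_def by blast
qed

locale stdT =
  fixes r :: nat and T :: "nat \<times> nat \<Rightarrow> nat"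
  assumes r: "r \<ge> 2" and std: "standard_tableau (hook_frame r) (r+1) T"
begin

lemma bij: "bij_betw T (cells (hook_frame r)) {1..r+1}"
  using std by (simp add: standard_tableau_def tableau_def)

lemma zero: "c \<notin> cells (hook_frame r) \<Longrightarrow> T c = 0"
  using std unfolding standard_tableau_def tableau_def by blast

lemma rowinc: "(i, Suc j) \<in> cells (hook_frame r) \<Longrightarrow> T (i, j) < T (i, Suc j)"
  using std by (simp add: standard_tableau_def)

lemma colinc: "(Suc i, j) \<in> cells (hook_frame r) \<Longrightarrow> T (i, j) < T (Suc i, j)"
  using std by (simp add: standard_tableau_def)

lemma cell_iff: "(i, j) \<in> cells (hook_frame r) \<longleftrightarrow> (j = 0 \<and> i < r) \<or> (i = 0 \<and> j = 1)"
  using r by (simp add: cells_hook)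

lemma range: "c \<in> cells (hook_frame r) \<Longrightarrow> T c \<in> {1..r+1}"
  using bij by (auto dest: bij_betw_apply)

lemma inj: "c \<in> cells (hook_frame r) \<Longrightarrow> d \<in> cells (hook_frame r) \<Longrightarrow> T c = T d \<longleftrightarrow> c = d"
  using bij by (auto simp: bij_betw_def inj_on_def)

lemma surj: "v \<in> {1..r+1} \<Longrightarrow> \<exists>c\<in>cells (hook_frame r). T c = v"
proof -
  assume v: "v \<in> {1..r+1}"
  then have "v \<in> T ` cells (hook_frame r)" using bij by (simp add: bij_betw_def)
  then show ?thesis by auto
qed

lemma T00: "T (0,0) = 1"
proof -
  obtain c where c: "c \<in> cells (hook_frame r)" "T c = 1" using surj[of 1] by auto
  obtain i j where ij: "c = (i,j)" by (cases c)
  show ?thesis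
  proof (cases "i = 0 \<and> j = 0")
    case True then show ?thesis using c ij by simp
  next
    case False
    then consider "i = 0" "j = 1" | i' where "i = Suc i'" "j = 0" "i < r"
      using c ij cell_iff by (cases i) auto
    then show ?thesis
    proof cases
      case 1
      have "T (0,0) < T (0,1)" using rowinc[of 0 0] cell_iff by simp
      moreover have "T (0,0) \<ge> 1" using range[of "(0,0)"] cell_iff r by simp
      ultimately show ?thesis using c ij 1 by simp
    next
      case 2
      have "T (i',0) < T (Suc i',0)" using colinc[of i' 0] cell_iff 2 by simp
      moreover have "T (i',0) \<ge> 1" using range[of "(i',0)"] cell_iff 2 by simp
      ultimately show ?thesis using c ij 2 by simp
    qed
  qed
qed

definition k where "k = T (0,1)"

lemma k_ge: "2 \<le> k" "k \<le> r+1"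
  using rowinc[of 0 0] cell_iff T00 range[of "(0,1)"] unfolding k_def by auto

lemma k_eq: "k = r+1 \<Longrightarrow> T = t_hook r"
proof -
  assume kN: "k = r+1"
  have low: "i < r \<Longrightarrow> T (i,0) \<ge> i+1" for i
  proof (induction i)
    case 0 then show ?case using T00 by simp
  next
    case (Suc i)
    then have "T (i,0) < T (Suc i, 0)" using colinc[of i 0] cell_iff by simp
    then show ?case using Suc by simp
  qed
  have up: "i < r \<Longrightarrow> T (i,0) \<le> r" for i
  proof -
    assume i: "i < r"
    have "T (i,0) \<in> {1..r+1}" using range[of "(i,0)"] cell_iff i by simp
    moreover have "T (i,0) \<noteq> T (0,1)" using inj[of "(i,0)" "(0,1)"] cell_iff i by simp
    ultimately show ?thesis using kN unfolding k_def by auto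
  qed
  have chain: "i + d < r \<Longrightarrow> T (i,0) + d \<le> T (i+d,0)" for i d
  proof (induction d)
    case 0 then show ?case by simp
  next
    case (Suc d)
    then have "T (i+d,0) < T (Suc (i+d), 0)" using colinc[of "i+d" 0] cell_iff by simp
    then show ?case using Suc by simp
  qed
  have col: "i < r \<Longrightarrow> T (i,0) = i+1" for i
  proof -
    assume i: "i < r"
    have "T (i,0) + (r - 1 - i) \<le> T (i + (r-1-i), 0)" using chain[of i "r-1-i"] i by simp
    moreover have "T (i + (r-1-i), 0) \<le> r" using up[of "i + (r-1-i)"] i by simp
    ultimately show ?thesis using low[OF i] i by simp
  qed
  show "T = t_hook r"
  proof
    fix c :: "nat \<times> nat"
    obtain i j where ij: "c = (i,j)" by (cases c)
    show "T c = t_hook r c"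
    proof (cases "c \<in> cells (hook_frame r)")
      case True
      then show ?thesis using ij cell_iff col kN unfolding k_def by (auto simp: t_hook_def)
    next
      case False
      then show ?thesis using ij cell_iff zero by (auto simp: t_hook_def)
    qed
  qed
qed

lemma k_lt: "T \<noteq> t_hook r \<Longrightarrow> k \<le> r"
  using k_eq k_ge by fastforce

lemma lex: "T \<noteq> t_hook r \<Longrightarrow> lex_greater (hook_frame r) (t_hook r) T"
  unfolding lex_greater_def
proof (rule bexI[where x="(0,1)"])
  assume "T \<noteq> t_hook r"
  then have "k \<le> r" by (rule k_lt)
  then show "T (0, 1) < t_hook r (0, 1) \<and>
    (\<forall>c'\<in>cells (hook_frame r). fst c' < fst (0::nat, 1::nat) \<or> fst c' = fst (0::nat, 1::nat) \<and> snd c' < snd (0::nat, 1::nat) \<longrightarrow> t_hook r c' = T c')"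
    using T00 r unfolding k_def by (auto simp: t_hook_def)
qed (simp add: cell_iff)

end



lemma row_group_comp:
  assumes "p \<in> row_group lam n T" "q \<in> row_group lam n T"
  shows "p \<circ> q \<in> row_group lam n T"
proof -
  have "p \<circ> q \<in> perms n" using assms perms_comp unfolding row_group_def by auto
  moreover have "\<forall>c\<in>cells lam. \<exists>c'\<in>cells lam. fst c' = fst c \<and> (p \<circ> q) (T c) = T c'"
  proof
    fix c assume c: "c \<in> cells lam"
    obtain c' where c': "c' \<in> cells lam" "fst c' = fst c" "q (T c) = T c'" using assms(2) c unfolding row_group_def by auto
    obtain c'' where c'': "c'' \<in> cells lam" "fst c'' = fst c'" "p (T c') = T c''" using assms(1) c' unfolding row_group_def by auto
    show "\<exists>c'\<in>cells lam. fst c' = fst c \<and> (p \<circ> q) (T c) = T c'" using c' c'' by auto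
  qed
  ultimately show ?thesis unfolding row_group_def by auto
qed

lemma transpose_perms: "a \<in> {1..n} \<Longrightarrow> b \<in> {1..n} \<Longrightarrow> transpose a b \<in> perms n"
  unfolding perms_def by (simp add: permutes_swap_id)

lemma young_sym_left:
  assumes tau: "\<tau> \<in> row_group lam n T" and inv: "\<tau> \<circ> \<tau> = id"
  shows "young_sym lam n T (\<tau> \<circ> q) = young_sym lam n T q"
  unfolding young_sym_def
  apply (rule sum.reindex_bij_witness[where i="\<lambda>a. \<tau> \<circ> a" and j="\<lambda>a. \<tau> \<circ> a"])
  subgoal for a using inv by (simp add: comp_assoc[symmetric])
  subgoal for a using row_group_comp[OF tau] by simp
  subgoal for a using inv by (simp add: comp_assoc[symmetric])
  subgoal for a using row_group_comp[OF tau] by simp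
  subgoal for a
  proof (rule sum.cong[OF refl])
    fix b
    have "(\<tau> \<circ> a \<circ> b = q) = (a \<circ> b = \<tau> \<circ> q)"
      by (metis inv comp_assoc id_comp)
    then show "(if \<tau> \<circ> a \<circ> b = q then of_int (sign b) else 0) = (if a \<circ> b = \<tau> \<circ> q then of_int (sign b) else 0)"
      by simp
  qed
  done

lemma h_a_right:
  assumes a: "a \<in> {1..r}" and b: "b \<in> {1..r}" and ab: "a \<noteq> b"
  shows "(h_a r (p \<circ> transpose a b) :: 'a::field) = - h_a r p"
proof (cases "p \<in> perms (r+1)")
  case True
  have tp: "transpose a b \<in> perms (r+1)" using a b by (intro transpose_perms) auto
  have pt: "p \<circ> transpose a b \<in> perms (r+1)" using perms_comp[OF True tp] .
  have sg: "sign (p \<circ> transpose a b) = - sign p"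
    using perm_of_perms[OF True] perm_of_perms[OF tp] ab by (simp add: sign_compose sign_swap_id)
  have "(p \<circ> transpose a b) (r+1) = p (r+1)" using a b by simp
  then show ?thesis unfolding h_a_val[OF True] h_a_val[OF pt] sg by simp
next
  case False
  have tp: "transpose a b \<in> perms (r+1)" using a b by (intro transpose_perms) auto
  have "p \<circ> transpose a b \<notin> perms (r+1)"
  proof
    assume "p \<circ> transpose a b \<in> perms (r+1)"
    then have "p \<circ> transpose a b \<circ> transpose a b \<in> perms (r+1)" using perms_comp tp by blast
    then show False using False by (simp add: comp_assoc)
  qed
  then show ?thesis using False unfolding h_a_def e_a_def f_a_def by simp
qed

lemma gr_mult_zero:
  fixes x y :: "(nat \<Rightarrow> nat) \<Rightarrow> 'a::field_char_0"
  assumes tp: "\<tau> \<in> perms n" and inv: "\<tau> \<circ> \<tau> = id"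
    and hx: "\<And>p. x (p \<circ> \<tau>) = - x p" and hy: "\<And>q. y (\<tau> \<circ> q) = y q"
  shows "gr_mult n x y = (\<lambda>_. 0)"
proof
  fix s
  have e1: "\<And>p. p \<circ> \<tau> \<circ> \<tau> = p" using inv by (simp add: comp_assoc)
  have e2: "\<And>q. \<tau> \<circ> (\<tau> \<circ> q) = q" using inv by (simp add: comp_assoc[symmetric])
  have "gr_mult n x y s = (\<Sum>p\<in>perms n. \<Sum>q\<in>perms n. if (p \<circ> \<tau>) \<circ> (\<tau> \<circ> q) = s then x (p \<circ> \<tau>) * y (\<tau> \<circ> q) else 0)"
    unfolding gr_mult_def
    apply (rule sum.reindex_bij_witness[where i="\<lambda>a. a \<circ> \<tau>" and j="\<lambda>a. a \<circ> \<tau>"])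
    subgoal for a by (rule e1)
    subgoal for a using perms_comp tp by blast
    subgoal for a by (rule e1)
    subgoal for a using perms_comp tp by blast
    subgoal for a
      unfolding e1
      apply (rule sum.reindex_bij_witness[where i="\<lambda>a. \<tau> \<circ> a" and j="\<lambda>a. \<tau> \<circ> a"])
      subgoal for q by (rule e2)
      subgoal for q using perms_comp tp by blast
      subgoal for q by (rule e2)
      subgoal for q using perms_comp tp by blast
      subgoal for q unfolding e2 ..
      done
    done
  also have "\<dots> = - gr_mult n x y s"
  proof -
    have eq: "\<And>p q. (p \<circ> \<tau>) \<circ> (\<tau> \<circ> q) = p \<circ> q" using e2 by (metis comp_assoc)
    show ?thesis unfolding gr_mult_def hx hy eq by (simp add: sum_negf[symmetric] if_distrib cong: if_cong)
  qed
  finally show "gr_mult n x y s = 0" by simp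
qed



context stdT begin

lemma tau_row:
  assumes ne: "T \<noteq> t_hook r"
  shows "transpose 1 k \<in> row_group (hook_frame r) (r+1) T"
proof -
  have kr: "2 \<le> k" "k \<le> r" using k_ge k_lt[OF ne] by auto
  have tp: "transpose 1 k \<in> perms (r+1)" using kr by (intro transpose_perms) auto
  have c00: "(0,0) \<in> cells (hook_frame r)" and c01: "(0,1) \<in> cells (hook_frame r)"
    using cell_iff r by auto
  have "\<exists>c'\<in>cells (hook_frame r). fst c' = fst c \<and> transpose 1 k (T c) = T c'"
    if c: "c \<in> cells (hook_frame r)" for c
  proof (cases "T c = 1 \<or> T c = k")
    case True
    then show ?thesis
    proof
      assume h: "T c = 1"
      then have "c = (0,0)" using inj[OF c c00] T00 by simp
      then show ?thesis using h c01 kr unfolding k_def by (intro bexI[where x="(0,1)"]) auto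
    next
      assume h: "T c = k"
      then have "c = (0,1)" using inj[OF c c01] unfolding k_def by simp
      then show ?thesis using h c00 kr T00 unfolding k_def by (intro bexI[where x="(0,0)"]) auto
    qed
  next
    case False
    then show ?thesis using c by (intro bexI[where x=c]) auto
  qed
  then show ?thesis using tp unfolding row_group_def by auto
qed

lemma part2:
  assumes ne: "T \<noteq> t_hook r"
  shows "gr_mult (r+1) (h_a r) (young_idem (hook_frame r) (r+1) T) = (\<lambda>_. 0 :: 'a::field_char_0)"
proof -
  have kr: "2 \<le> k" "k \<le> r" using k_ge k_lt[OF ne] by auto
  have tp: "transpose 1 k \<in> perms (r+1)" using kr by (intro transpose_perms) auto
  have "gr_mult (r+1) (h_a r) (young_sym (hook_frame r) (r+1) T) = (\<lambda>_. 0 :: 'a)"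
  proof (rule gr_mult_zero[OF tp])
    show "transpose 1 k \<circ> transpose 1 k = id" by simp
    show "\<And>p. (h_a r (p \<circ> transpose 1 k) :: 'a) = - h_a r p"
      using kr by (intro h_a_right) auto
    show "\<And>q. (young_sym (hook_frame r) (r + 1) T (transpose 1 k \<circ> q) :: 'a) = young_sym (hook_frame r) (r + 1) T q"
      by (rule young_sym_left[OF tau_row[OF ne]]) simp
  qed
  then show ?thesis unfolding young_idem_def gr_mult_scale2 by simp
qed

end



lemma perms_fix: "p \<in> perms n \<Longrightarrow> x \<notin> {1..n} \<Longrightarrow> p x = x"
  unfolding perms_def by (simp add: permutes_not_in)

lemma row_hook:
  assumes r: "r \<ge> 2"
  shows "row_group (hook_frame r) (r+1) (t_hook r) = {id, transpose 1 (r+1)}"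
proof
  show "row_group (hook_frame r) (r+1) (t_hook r) \<subseteq> {id, transpose 1 (r+1)}"
  proof
    fix p assume p: "p \<in> row_group (hook_frame r) (r+1) (t_hook r)"
    then have pP: "p \<in> perms (r+1)" unfolding row_group_def by auto
    have rows: "\<forall>c\<in>cells (hook_frame r). \<exists>c'\<in>cells (hook_frame r). fst c' = fst c \<and> p (t_hook r c) = t_hook r c'"
      using p unfolding row_group_def by auto
    have mid: "p x = x" if "2 \<le> x" "x \<le> r" for x
    proof -
      have "(x - 1, 0) \<in> cells (hook_frame r)" using that r by (simp add: cells_hook)
      then obtain c' where c': "c' \<in> cells (hook_frame r)" "fst c' = x - 1" "p (t_hook r (x-1,0)) = t_hook r c'"
        using rows by fastforce
      then have "c' = (x-1, 0)" using that r by (cases c') (auto simp: cells_hook)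
      moreover have tx: "t_hook r (x-1,0) = x" using that by (simp add: t_hook_def)
      ultimately show ?thesis using c' by simp
    qed
    have p1: "p 1 = 1 \<or> p 1 = r+1"
    proof -
      have "(0, 0) \<in> cells (hook_frame r)" using r by (simp add: cells_hook)
      then obtain c' where c': "c' \<in> cells (hook_frame r)" "fst c' = 0" "p (t_hook r (0,0)) = t_hook r c'"
        using rows by fastforce
      then have "c' = (0,0) \<or> c' = (0,1)" using r by (cases c') (auto simp: cells_hook)
      then show ?thesis using c' r by (auto simp: t_hook_def)
    qed
    have pN: "p (r+1) \<in> {1..r+1}" using perms_range[OF pP] by simp
    show "p \<in> {id, transpose 1 (r+1)}"
    proof (cases "p 1 = 1")
      case True
      have "p (r+1) = r+1"
      proof (rule ccontr)
        assume ne: "p (r+1) \<noteq> r+1"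
        show False
        proof (cases "p (r+1) = 1")
          case True then show False using \<open>p 1 = 1\<close> perms_inj[OF pP, of "r+1" 1] r by simp
        next
          case False
          then have "2 \<le> p (r+1)" "p (r+1) \<le> r" using pN ne by auto
          then have "p (p (r+1)) = p (r+1)" using mid by blast
          then have "p (r+1) = r+1" using perms_inj[OF pP] by blast
          then show False using ne by simp
        qed
      qed
      then have "p = id"
      proof (intro ext)
        fix x
        consider "x = 1" | "x = r+1" | "2 \<le> x" "x \<le> r" | "x \<notin> {1..r+1}" by force
        then show "p x = id x"
          by cases (use True \<open>p (r+1) = r+1\<close> mid perms_fix[OF pP] in auto)
      qed
      then show ?thesis by simp
    next
      case False
      then have p1N: "p 1 = r+1" using p1 by simp
      have "p (r+1) = 1"
      proof (rule ccontr)
        assume ne: "p (r+1) \<noteq> 1"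
        show False
        proof (cases "p (r+1) = r+1")
          case True then show False using p1N perms_inj[OF pP, of "r+1" 1] r by simp
        next
          case False
          then have "2 \<le> p (r+1)" "p (r+1) \<le> r" using pN ne by auto
          then have "p (p (r+1)) = p (r+1)" using mid by blast
          then have "p (r+1) = r+1" using perms_inj[OF pP] by blast
          then show False using False by simp
        qed
      qed
      then have "p = transpose 1 (r+1)"
      proof (intro ext)
        fix x
        show "p x = transpose 1 (r+1) x"
        proof (cases "x = 1 \<or> x = r+1")
          case True then show ?thesis using p1N \<open>p (r+1) = 1\<close> by auto
        next
          case False
          then consider "2 \<le> x" "x \<le> r" | "x \<notin> {1..r+1}" by force
          then have "p x = x" by cases (use mid perms_fix[OF pP] in auto)
          then show ?thesis using False by simp
        qed
      qed
      then show ?thesis by simp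
    qed
  qed
next
  have idP: "id \<in> perms (r+1)" unfolding perms_def by (simp add: permutes_id)
  have tP: "transpose 1 (r+1) \<in> perms (r+1)" by (intro transpose_perms) auto
  have "id \<in> row_group (hook_frame r) (r+1) (t_hook r)"
    using idP unfolding row_group_def by auto
  moreover have "transpose 1 (r+1) \<in> row_group (hook_frame r) (r+1) (t_hook r)"
  proof -
    have "\<exists>c'\<in>cells (hook_frame r). fst c' = fst c \<and> transpose 1 (r+1) (t_hook r c) = t_hook r c'"
      if c: "c \<in> cells (hook_frame r)" for c
    proof -
      obtain i j where ij: "c = (i,j)" by (cases c)
      consider "i = 0" "j = 0" | "i = 0" "j = 1" | "j = 0" "0 < i" "i < r" using c ij r by (auto simp: cells_hook)
      then show ?thesis
      proof cases
        case 1 then show ?thesis using ij r by (intro bexI[where x="(0,1)"]) (auto simp: cells_hook t_hook_def)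
      next
        case 2 then show ?thesis using ij r by (intro bexI[where x="(0,0)"]) (auto simp: cells_hook t_hook_def)
      next
        case 3 then show ?thesis using ij r c by (intro bexI[where x="(i,0)"]) (auto simp: cells_hook t_hook_def)
      qed
    qed
    then show ?thesis using tP unfolding row_group_def by auto
  qed
  ultimately show "{id, transpose 1 (r+1)} \<subseteq> row_group (hook_frame r) (r+1) (t_hook r)" by auto
qed

lemma col_hook:
  assumes r: "r \<ge> 2"
  shows "col_group (hook_frame r) (r+1) (t_hook r) = {p \<in> perms (r+1). p (r+1) = r+1}"
proof safe
  fix p assume p: "p \<in> col_group (hook_frame r) (r+1) (t_hook r)"
  then show "p \<in> perms (r+1)" unfolding col_group_def by auto
  have "(0, 1) \<in> cells (hook_frame r)" using r by (simp add: cells_hook)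
  then obtain c' where c': "c' \<in> cells (hook_frame r)" "snd c' = 1" "p (t_hook r (0,1)) = t_hook r c'"
    using p unfolding col_group_def by fastforce
  then have "c' = (0,1)" using r by (cases c') (auto simp: cells_hook)
  then show "p (r+1) = r+1" using c' by (simp add: t_hook_def)
next
  fix p assume pP: "p \<in> perms (r+1)" and pN: "p (r+1) = r+1"
  have "\<exists>c'\<in>cells (hook_frame r). snd c' = snd c \<and> p (t_hook r c) = t_hook r c'"
    if c: "c \<in> cells (hook_frame r)" for c
  proof -
    obtain i j where ij: "c = (i,j)" by (cases c)
    consider "i = 0" "j = 1" | "j = 0" "i < r" using c ij r by (auto simp: cells_hook)
    then show ?thesis
    proof cases
      case 1 then show ?thesis using ij r pN by (intro bexI[where x="(0,1)"]) (auto simp: cells_hook t_hook_def)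
    next
      case 2
      have tc: "t_hook r c = i + 1" using 2 ij by (simp add: t_hook_def)
      have "p (i+1) \<in> {1..r+1}" using perms_range[OF pP] 2 by simp
      moreover have "p (i+1) \<noteq> r+1" using perms_inj[OF pP, of "i+1" "r+1"] pN 2 by simp
      ultimately have "p (i+1) - 1 < r" "p (i+1) \<ge> 1" by auto
      then show ?thesis using ij 2 tc r
        by (intro bexI[where x="(p (i+1) - 1, 0)"]) (auto simp: cells_hook t_hook_def)
    qed
  qed
  then show "p \<in> col_group (hook_frame r) (r+1) (t_hook r)" using pP unfolding col_group_def by auto
qed

lemma young_sym_hook:
  assumes r: "r \<ge> 2"
  shows "young_sym (hook_frame r) (r+1) (t_hook r) = (yt r :: (nat \<Rightarrow> nat) \<Rightarrow> 'a::field)"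
proof
  fix s :: "nat \<Rightarrow> nat"
  let ?V = "{p \<in> perms (r+1). p (r+1) = r+1}"
  let ?t = "transpose 1 (r+1)"
  have ne: "id \<noteq> ?t"
  proof
    assume "id = ?t"
    then have "id 1 = ?t 1" by simp
    then show False using r by simp
  qed
  have finV: "finite ?V" using finite_perms by simp
  have eq2: "\<And>b. (?t \<circ> b = s) = (b = ?t \<circ> s)" by (auto simp: comp_assoc[symmetric])
  have "young_sym (hook_frame r) (r+1) (t_hook r) s =
        (\<Sum>b\<in>?V. if b = s then of_int (sign b) else 0) + (\<Sum>b\<in>?V. if ?t \<circ> b = s then of_int (sign b) else 0)"
    unfolding young_sym_def row_hook[OF r] col_hook[OF r] using ne by simp
  also have "\<dots> = (\<Sum>b\<in>?V. if b = s then of_int (sign b) else 0) + (\<Sum>b\<in>?V. if b = ?t \<circ> s then of_int (sign b) else 0)"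
    unfolding eq2 ..
  also have "\<dots> = (if s \<in> ?V then of_int (sign s) else 0) + (if ?t \<circ> s \<in> ?V then of_int (sign (?t \<circ> s)) else 0)"
    using finV by (simp add: sum.delta' del: mem_Collect_eq)
  also have "\<dots> = yt r s"
  proof (cases "s \<in> perms (r+1)")
    case True
    have tP: "?t \<in> perms (r+1)" by (intro transpose_perms) auto
    have tsP: "?t \<circ> s \<in> perms (r+1)" using perms_comp[OF tP True] .
    have sg: "sign (?t \<circ> s) = - sign s"
      using perm_of_perms[OF True] perm_of_perms[OF tP] r by (simp add: sign_compose sign_swap_id)
    have "(?t \<circ> s) (r+1) = r+1 \<longleftrightarrow> s (r+1) = 1"
      using r by (auto simp: transpose_def)
    then show ?thesis using True tsP sg r unfolding yt_def by auto
  next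
    case False
    have tP: "?t \<in> perms (r+1)" by (intro transpose_perms) auto
    have "?t \<circ> s \<notin> perms (r+1)"
    proof
      assume "?t \<circ> s \<in> perms (r+1)"
      then have "?t \<circ> (?t \<circ> s) \<in> perms (r+1)" using perms_comp[OF tP] by blast
      then show False using False by (simp add: comp_assoc[symmetric])
    qed
    then show ?thesis using False unfolding yt_def by auto
  qed
  finally show "young_sym (hook_frame r) (r+1) (t_hook r) s = yt r s" .
qed



lemma sign_sq_int: "(of_int (sign p) :: 'a::comm_ring_1) * of_int (sign p * x) = of_int x"
proof -
  have "(of_int (sign p) :: 'a) * of_int (sign p * x) = of_int (sign p * sign p * x)" by (simp only: of_int_mult mult.assoc)
  also have "\<dots> = of_int x" by simp
  finally show ?thesis .
qed

lemma yy:
  assumes r: "r \<ge> 2"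
  shows "gr_mult (r+1) (yt r) (yt r) = (\<lambda>s. (of_nat (fact r + fact (r-1)) :: 'a::field_char_0) * yt r s)"
proof
  fix s :: "nat \<Rightarrow> nat"
  show "gr_mult (r+1) (yt r) (yt r) s = (of_nat (fact r + fact (r-1)) :: 'a) * yt r s"
  proof (cases "s \<in> perms (r+1)")
    case True
    have m: "s (r+1) \<in> {1..r+1}" using perms_range[OF True] by simp
    have "gr_mult (r+1) (yt r) (yt r) s = (\<Sum>p\<in>perms (r+1). (yt r p :: 'a) * yt r (inv p \<circ> s))"
      by (rule gr_mult_perm[OF True])
    also have "\<dots> = (\<Sum>p\<in>perms (r+1). of_int (sign s) * ((of_bool (p (r+1) = r+1) - of_bool (p (r+1) = 1))
            * (of_bool (p (r+1) = s (r+1)) - of_bool (p 1 = s (r+1)))))"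
    proof (rule sum.cong[OF refl])
      fix p assume p: "p \<in> perms (r+1)"
      have "(yt r p :: 'a) * yt r (inv p \<circ> s) = (of_int (sign p) * of_int (sign p * sign s)) * ((of_bool (p (r+1) = r+1) - of_bool (p (r+1) = 1))
            * (of_bool (p (r+1) = s (r+1)) - of_bool (p 1 = s (r+1))))"
        unfolding yt_inv_comp[OF p True] using p by (simp add: yt_def)
      then show "(yt r p :: 'a) * yt r (inv p \<circ> s) = of_int (sign s) * ((of_bool (p (r+1) = r+1) - of_bool (p (r+1) = 1))
            * (of_bool (p (r+1) = s (r+1)) - of_bool (p 1 = s (r+1))))"
        by (simp only: sign_sq_int)
    qed
    also have "\<dots> = of_int (sign s) * (of_nat (fact r + fact (r-1)) * (of_bool (s (r+1) = r+1) - of_bool (s (r+1) = 1)))"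
      by (simp only: sum_distrib_left[symmetric] YS[OF r m])
    also have "\<dots> = (of_nat (fact r + fact (r-1)) :: 'a) * yt r s"
      using True by (simp add: yt_def)
    finally show ?thesis .
  next
    case False
    then show ?thesis by (simp add: gr_mult_notperm yt_def)
  qed
qed

lemma fact_arith:
  assumes r: "r \<ge> 2"
  shows "(of_nat (fact r + fact (r-1)) :: 'a::field_char_0) * (1 / of_nat (fact r) - 1 / of_nat (fact (r+1))) = 1"
    and "(of_nat (fact r + fact (r-1)) :: 'a::field_char_0) * (0 / of_nat (fact r) - 1 / of_nat (fact (r+1))) = - 1 / of_nat r"
proof -
  obtain k where k: "r = Suc k" using r by (cases r) auto
  have n1: "(fact r + fact (r-1)) * r = (fact (r+1) :: nat)"
    unfolding k by (simp add: algebra_simps)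
  have n2: "(fact r + fact (r-1)) * r = (fact r * (r+1) :: nat)"
    unfolding k by (simp add: algebra_simps)
  define C where "C = (of_nat (fact r + fact (r-1)) :: 'a)"
  define A where "A = (of_nat (fact r) :: 'a)"
  define B where "B = (of_nat (fact (r+1)) :: 'a)"
  define R where "R = (of_nat r :: 'a)"
  have c1: "C * R = B" unfolding C_def R_def B_def by (metis n1 of_nat_mult)
  have c2: "C * R = A * (R + 1)" unfolding C_def R_def A_def by (metis n2 of_nat_mult of_nat_add of_nat_1)
  have nz: "A \<noteq> 0" "B \<noteq> 0" "R \<noteq> 0" unfolding A_def B_def R_def using r by (simp_all only: of_nat_eq_0_iff fact_nonzero not_False_eq_True)
  have "C * (1 / A - 1 / B) = 1"
  proof -
    have "C / A = (R + 1) / R" using c2 nz by (simp add: field_simps)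
    moreover have "C / B = 1 / R" using c1 nz by (simp add: field_simps)
    ultimately have "C / A - C / B = (R + 1) / R - 1 / R" by simp
    also have "\<dots> = 1" using nz by (simp add: field_simps)
    finally show ?thesis by (simp add: right_diff_distrib)
  qed
  then show "(of_nat (fact r + fact (r-1)) :: 'a) * (1 / of_nat (fact r) - 1 / of_nat (fact (r+1))) = 1"
    unfolding C_def A_def B_def .
  have "C * (0 / A - 1 / B) = - 1 / R" using c1 nz by (simp add: field_simps)
  then show "(of_nat (fact r + fact (r-1)) :: 'a) * (0 / of_nat (fact r) - 1 / of_nat (fact (r+1))) = - 1 / of_nat r"
    unfolding C_def A_def B_def R_def .
qed



lemma hy:
  assumes r: "r \<ge> 2"
  shows "gr_mult (r+1) (h_a r) (yt r) = (\<lambda>s. (of_nat (fact r + fact (r-1)) :: 'a::field_char_0) * h_a r s)"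
proof
  fix s :: "nat \<Rightarrow> nat"
  show "gr_mult (r+1) (h_a r) (yt r) s = (of_nat (fact r + fact (r-1)) :: 'a) * h_a r s"
  proof (cases "s \<in> perms (r+1)")
    case True
    have m: "s (r+1) \<in> {1..r+1}" using perms_range[OF True] by simp
    have sP: "s \<in> perms (r+1)" by (rule True)
    have "gr_mult (r+1) (h_a r) (yt r) s = (\<Sum>p\<in>perms (r+1). (h_a r p :: 'a) * yt r (inv p \<circ> s))"
      by (rule gr_mult_perm[OF True])
    also have "\<dots> = (\<Sum>p\<in>perms (r+1). of_int (sign s) * ((of_bool (p (r+1) = r+1) / of_nat (fact r) - 1 / of_nat (fact (r+1)))
            * (of_bool (p (r+1) = s (r+1)) - of_bool (p 1 = s (r+1)))))"
    proof (rule sum.cong[OF refl])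
      fix p assume p: "p \<in> perms (r+1)"
      have "(h_a r p :: 'a) * yt r (inv p \<circ> s) = (of_int (sign p) * of_int (sign p * sign s)) * ((of_bool (p (r+1) = r+1) / of_nat (fact r) - 1 / of_nat (fact (r+1)))
            * (of_bool (p (r+1) = s (r+1)) - of_bool (p 1 = s (r+1))))"
        unfolding yt_inv_comp[OF p True] h_a_val[OF p] by (simp only: ac_simps)
      then show "(h_a r p :: 'a) * yt r (inv p \<circ> s) = of_int (sign s) * ((of_bool (p (r+1) = r+1) / of_nat (fact r) - 1 / of_nat (fact (r+1)))
            * (of_bool (p (r+1) = s (r+1)) - of_bool (p 1 = s (r+1))))"
        by (simp only: sign_sq_int)
    qed
    also have "\<dots> = of_int (sign s) * (if s (r+1) = r+1 then 1 else - 1 / of_nat r)"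
      by (simp only: sum_distrib_left[symmetric] HS[OF r m])
    also have "\<dots> = (of_nat (fact r + fact (r-1)) :: 'a) * h_a r s"
    proof (cases "s (r+1) = r+1")
      case True
      then have e: "(s (r+1) = r+1) = True" by simp
      show ?thesis unfolding h_a_val[OF sP] mult.left_commute[of "of_nat (fact r + fact (r-1)) :: 'a"]
        by (simp only: e if_True of_bool_eq(2) fact_arith(1)[OF r, where 'a='a])
    next
      case False
      then have e: "(s (r+1) = r+1) = False" by simp
      show ?thesis unfolding h_a_val[OF sP] mult.left_commute[of "of_nat (fact r + fact (r-1)) :: 'a"]
        by (simp only: e if_False of_bool_eq(1) fact_arith(2)[OF r, where 'a='a])
    qed
    finally show ?thesis .
  next
    case False
    have "gr_mult (r+1) (h_a r) (yt r) s = (0::'a)" using False by (simp add: gr_mult_notperm)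
    moreover have "(h_a r s :: 'a) = 0" using False unfolding h_a_def e_a_def f_a_def by simp
    ultimately show ?thesis by simp
  qed
qed

lemma yt_id: "r \<ge> 1 \<Longrightarrow> (yt r id :: 'a::field) = 1"
  unfolding yt_def perms_def by (simp add: permutes_id)

lemma mu_hook:
  assumes r: "r \<ge> 2"
  shows "(young_mu (hook_frame r) (r+1) (t_hook r) :: 'a::field_char_0) = 1 / of_nat (fact r + fact (r-1))"
proof -
  define c where "c = (of_nat (fact r + fact (r-1)) :: 'a)"
  have c0: "c \<noteq> 0" unfolding c_def by (simp only: of_nat_eq_0_iff) (simp add: fact_nonzero)
  have "(THE \<mu>. \<mu> \<noteq> 0 \<and> gr_mult (r+1) (\<lambda>s. \<mu> * yt r s) (\<lambda>s. \<mu> * yt r s) = (\<lambda>s. \<mu> * (yt r s :: 'a))) = 1 / c"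
  proof (rule the_equality)
    show "1 / c \<noteq> 0 \<and> gr_mult (r+1) (\<lambda>s. 1 / c * yt r s) (\<lambda>s. 1 / c * yt r s) = (\<lambda>s. 1 / c * (yt r s :: 'a))"
      unfolding gr_mult_scale yy[OF r] c_def[symmetric] using c0 by (simp add: field_simps)
  next
    fix \<mu> :: 'a
    assume h: "\<mu> \<noteq> 0 \<and> gr_mult (r+1) (\<lambda>s. \<mu> * yt r s) (\<lambda>s. \<mu> * yt r s) = (\<lambda>s. \<mu> * yt r s)"
    then have "(\<lambda>s. \<mu> * \<mu> * (c * yt r s)) = (\<lambda>s. \<mu> * yt r s)"
      unfolding gr_mult_scale yy[OF r] c_def[symmetric] by simp
    then have "\<mu> * \<mu> * (c * yt r id) = \<mu> * yt r id" by (metis)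
    then have "\<mu> * (\<mu> * c) = \<mu> * 1" using yt_id[of r, where 'a='a] r by (simp add: mult.assoc)
    then have "\<mu> * c = 1" using h by (metis mult_left_cancel)
    then show "\<mu> = 1 / c" using c0 by (simp add: field_simps)
  qed
  then show ?thesis
    unfolding young_mu_def young_sym_hook[OF r] Let_def c_def .
qed

theorem theorem4:
  fixes r :: nat
  assumes "r \<ge> 2"
  shows "standard_tableau (hook_frame r) (r+1) (t_hook r)
    \<and> (\<forall>T. standard_tableau (hook_frame r) (r+1) T \<and> T \<noteq> t_hook r
            \<longrightarrow> lex_greater (hook_frame r) (t_hook r) T)
    \<and> gr_mult (r+1) (h_a r) (young_idem (hook_frame r) (r+1) (t_hook r))
        = (h_a r :: (nat \<Rightarrow> nat) \<Rightarrow> 'a::field_char_0)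
    \<and> (\<forall>T. standard_tableau (hook_frame r) (r+1) T \<and> T \<noteq> t_hook r
            \<longrightarrow> gr_mult (r+1) (h_a r) (young_idem (hook_frame r) (r+1) T)
                 = (\<lambda>_. 0 :: 'a))"
proof (intro conjI allI impI)
  show "standard_tableau (hook_frame r) (r+1) (t_hook r)" by (rule t_hook_standard[OF assms])
next
  fix T assume "standard_tableau (hook_frame r) (r+1) T \<and> T \<noteq> t_hook r"
  then show "lex_greater (hook_frame r) (t_hook r) T"
    using stdT.lex[OF stdT.intro[OF assms]] by blast
next
  fix T assume "standard_tableau (hook_frame r) (r+1) T \<and> T \<noteq> t_hook r"
  then show "gr_mult (r+1) (h_a r) (young_idem (hook_frame r) (r+1) T) = (\<lambda>_. 0 :: 'a)"
    using stdT.part2[OF stdT.intro[OF assms]] by blast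
next
  define c where "c = (of_nat (fact r + fact (r-1)) :: 'a)"
  have c0: "c \<noteq> 0" unfolding c_def by (simp only: of_nat_eq_0_iff) (simp add: fact_nonzero)
  have "young_idem (hook_frame r) (r+1) (t_hook r) = (\<lambda>s. 1 / c * (yt r s :: 'a))"
    unfolding young_idem_def mu_hook[OF assms] young_sym_hook[OF assms] c_def ..
  show "gr_mult (r+1) (h_a r) (young_idem (hook_frame r) (r+1) (t_hook r)) = (h_a r :: (nat \<Rightarrow> nat) \<Rightarrow> 'a)"
  proof -
    have "gr_mult (r+1) (h_a r) (\<lambda>s. 1 / c * (yt r s :: 'a)) = (\<lambda>s. 1 / c * (c * h_a r s))"
      unfolding gr_mult_scale2 hy[OF assms] c_def ..
    then show ?thesis using c0 \<open>young_idem (hook_frame r) (r+1) (t_hook r) = (\<lambda>s. 1 / c * (yt r s :: 'a))\<close> by simp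
  qed
qed

end
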